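(* There exist infinitely many finite simple graphs $G$ with $\chi_{DP}(G) < AT(G)$; moreover, for every real $M > 0$ there exists a finite simple graph $G$ with $AT(G) / \chi_{DP}(G) > M$.
   Context: Alon--Tarsi number: for a digraph $D$, an Eulerian subdigraph is a spanning subdigraph $F$ with $d^+_F(v) = d^-_F(v)$ for all $v$, called even or odd according to the parity of its number of edges; $AT(G)$ is the minimum $k$ such that some orientation $D$ of $G$ has all outdegrees less than $k$ and the numbers of even and odd Eulerian subdigraphs of $D$ differ. Correspondence coloring: a correspondence assignment $(L,C)$ for $G$ consists of a list $L(v)$ of colors for each vertex $v$ and, for each edge $uv$, a partial matching $C_{uv}$ between $\{u\}\times L(u)$ and $\{v\}\times L(v)$. An $(L,C)$-coloring is a choice $\phi(v)\in L(v)$ for each $v$ such that for every edge $uv$, $(u,\phi(u))$ and $(v,\phi(v))$ are not matched in $C_{uv}$. $G$ is $k$-correspondence-colorable if it has an $(L,C)$-coloring for every correspondence assignment with all lists of size $k$; the correspondence chromatic number $\chi_{DP}(G)$ is the least such $k$. *)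

theory Defs
  imports Complex_Main
begin

definition simple_graph :: "nat set \<Rightarrow> nat set set \<Rightarrow> bool" where
  "simple_graph V E \<longleftrightarrow> finite V \<and> (\<forall>e\<in>E. e \<subseteq> V \<and> card e = 2)"

definition graph_iso :: "nat set \<times> nat set set \<Rightarrow> nat set \<times> nat set set \<Rightarrow> bool" where
  "graph_iso G H \<longleftrightarrow> (\<exists>f. bij_betw f (fst G) (fst H) \<and>
      (\<forall>u\<in>fst G. \<forall>v\<in>fst G. ({u, v} \<in> snd G \<longleftrightarrow> {f u, f v} \<in> snd H)))"

definition orientation :: "nat set set \<Rightarrow> (nat \<times> nat) set \<Rightarrow> bool" where
  "orientation E D \<longleftrightarrow>
     (\<forall>(u,v)\<in>D. {u, v} \<in> E) \<and>
     (\<forall>u v. {u, v} \<in> E \<longrightarrow> u \<noteq> v \<longrightarrow> ((u,v) \<in> D \<longleftrightarrow> (v,u) \<notin> D))"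

definition outdeg :: "(nat \<times> nat) set \<Rightarrow> nat \<Rightarrow> nat" where
  "outdeg F v = card {w. (v, w) \<in> F}"

definition indeg :: "(nat \<times> nat) set \<Rightarrow> nat \<Rightarrow> nat" where
  "indeg F v = card {w. (w, v) \<in> F}"

definition eulerian_subdigraphs :: "nat set \<Rightarrow> (nat \<times> nat) set \<Rightarrow> (nat \<times> nat) set set" where
  "eulerian_subdigraphs V D = {F. F \<subseteq> D \<and> (\<forall>v\<in>V. outdeg F v = indeg F v)}"

definition AT :: "nat set \<Rightarrow> nat set set \<Rightarrow> nat" where
  "AT V E = (LEAST k. \<exists>D. orientation E D \<and> (\<forall>v\<in>V. outdeg D v < k) \<and>
      card {F \<in> eulerian_subdigraphs V D. even (card F)} \<noteq>
      card {F \<in> eulerian_subdigraphs V D. odd (card F)})"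

text \<open>Correspondence assignments: lists L v (colours are naturals) and, for each
  ordered pair (u,v) with {u,v} an edge, a partial matching C u v between L u and L v,
  with C v u the converse of C u v.  (c,d) \<in> C u v means (u,c) is matched to (v,d).\<close>
definition partial_matching :: "nat set \<Rightarrow> nat set \<Rightarrow> (nat \<times> nat) set \<Rightarrow> bool" where
  "partial_matching A B M \<longleftrightarrow> M \<subseteq> A \<times> B \<and>
     (\<forall>c d d'. (c, d) \<in> M \<and> (c, d') \<in> M \<longrightarrow> d = d') \<and>
     (\<forall>c c' d. (c, d) \<in> M \<and> (c', d) \<in> M \<longrightarrow> c = c')"

definition correspondence_assignment ::
  "nat set \<Rightarrow> nat set set \<Rightarrow> (nat \<Rightarrow> nat set) \<Rightarrow> (nat \<Rightarrow> nat \<Rightarrow> (nat \<times> nat) set) \<Rightarrow> bool" where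
  "correspondence_assignment V E L C \<longleftrightarrow>
     (\<forall>u v. {u, v} \<in> E \<longrightarrow> u \<noteq> v \<longrightarrow>
        partial_matching (L u) (L v) (C u v) \<and> C v u = (C u v)\<inverse>)"

definition LC_coloring ::
  "nat set \<Rightarrow> nat set set \<Rightarrow> (nat \<Rightarrow> nat set) \<Rightarrow> (nat \<Rightarrow> nat \<Rightarrow> (nat \<times> nat) set) \<Rightarrow> (nat \<Rightarrow> nat) \<Rightarrow> bool" where
  "LC_coloring V E L C \<phi> \<longleftrightarrow> (\<forall>v\<in>V. \<phi> v \<in> L v) \<and>
     (\<forall>u v. {u, v} \<in> E \<longrightarrow> u \<noteq> v \<longrightarrow> (\<phi> u, \<phi> v) \<notin> C u v)"

definition correspondence_colorable :: "nat set \<Rightarrow> nat set set \<Rightarrow> nat \<Rightarrow> bool" where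
  "correspondence_colorable V E k \<longleftrightarrow>
     (\<forall>L C. (\<forall>v\<in>V. finite (L v) \<and> card (L v) = k) \<and> correspondence_assignment V E L C
        \<longrightarrow> (\<exists>\<phi>. LC_coloring V E L C \<phi>))"

definition chi_DP :: "nat set \<Rightarrow> nat set set \<Rightarrow> nat" where
  "chi_DP V E = (LEAST k. correspondence_colorable V E k)"

end

theory Submission
  imports Defs "HOL-Library.FuncSet"
begin


lemma bern_aux:
  fixes h d :: real
  assumes "h \<ge> 0" "d \<ge> 0"
  shows "(h + d) ^ Suc m \<ge> h ^ Suc m + real (Suc m) * h ^ m * d"
proof (induction m)
  case 0 then show ?case by simp
next
  case (Suc m)
  have "(h + d) ^ Suc (Suc m) = (h + d) * (h + d) ^ Suc m" by simp
  also have "\<dots> \<ge> (h + d) * (h ^ Suc m + real (Suc m) * h ^ m * d)"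
    using Suc assms by (intro mult_left_mono) auto
  finally have 1: "(h + d) ^ Suc (Suc m) \<ge> (h + d) * (h ^ Suc m + real (Suc m) * h ^ m * d)" .
  have "(h + d) * (h ^ Suc m + real (Suc m) * h ^ m * d) =
        h ^ Suc (Suc m) + real (Suc (Suc m)) * h ^ Suc m * d + d * (real (Suc m) * h ^ m * d)"
    by (simp add: algebra_simps)
  moreover have "d * (real (Suc m) * h ^ m * d) \<ge> 0" using assms by simp
  ultimately show ?case using 1 by linarith
qed

lemma count_bound:
  fixes R :: "nat \<Rightarrow> (nat \<times> nat) set" and k :: nat
  assumes "finite A" "k \<ge> 1"
  shows "(\<forall>a\<in>A. finite (L a) \<and> card (L a) = k) \<Longrightarrow>
    (\<forall>a\<in>A. \<forall>x c c'. (x,c)\<in>R a \<and> (x,c')\<in>R a \<longrightarrow> c = c') \<Longrightarrow>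
    (\<forall>a\<in>A. \<forall>x x' c. (x,c)\<in>R a \<and> (x',c)\<in>R a \<longrightarrow> x = x') \<Longrightarrow> finite S \<Longrightarrow>
    real (card {\<phi>\<in>PiE A L. \<forall>c\<in>S. \<exists>a\<in>A. (\<phi> a, c)\<in>R a})
      \<le> real k ^ card A * (1 - (1 - 1 / real k) ^ card A) ^ card S"
  using assms(1)
proof (induction A arbitrary: S rule: finite_induct)
  case empty
  then show ?case
    by (cases "S = {}") (auto simp: card_le_Suc0_iff_eq)
next
  case (insert a A)
  define n where "n = card A"
  define h where "h = 1 - (1 - 1 / real k) ^ n"
  define m where "m = card S"
  define blk where "blk x = {c. (x, c) \<in> R a}" for x
  define T where "T S' = {\<phi>\<in>PiE A L. \<forall>c\<in>S'. \<exists>a\<in>A. (\<phi> a, c)\<in>R a}" for S'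
  have kpos: "real k \<ge> 1" using assms(2) by simp
  have q01: "0 \<le> 1 - 1 / real k" "1 - 1 / real k \<le> 1" using kpos by (auto simp: field_simps)
  have h0: "0 \<le> h" and h1: "h \<le> 1" unfolding h_def using q01
    by (auto simp: power_le_one)
  have cardins: "card (insert a A) = Suc n" using insert.hyps n_def by simp
  have eqset: "{\<phi>\<in>PiE (insert a A) L. \<forall>c\<in>S. \<exists>a'\<in>insert a A. (\<phi> a', c)\<in>R a'}
      = (\<lambda>(y, g). g(a := y)) ` Sigma (L a) (\<lambda>x. T (S - blk x))"
  proof (intro equalityI subsetI)
    fix f assume f: "f \<in> {\<phi>\<in>PiE (insert a A) L. \<forall>c\<in>S. \<exists>a'\<in>insert a A. (\<phi> a', c)\<in>R a'}"
    then have fP: "f \<in> PiE (insert a A) L" by simp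
    then obtain y g where yg: "y \<in> L a" "g \<in> PiE A L" "f = g(a := y)"
      using PiE_insert_eq[of a A L] by auto
    have "g \<in> T (S - blk y)"
      unfolding T_def blk_def
    proof (intro CollectI conjI ballI)
      show "g \<in> PiE A L" by fact
      fix c assume c: "c \<in> S - {c. (y, c) \<in> R a}"
      then obtain a' where a': "a' \<in> insert a A" "(f a', c) \<in> R a'" using f by auto
      show "\<exists>a'\<in>A. (g a', c) \<in> R a'"
      proof (cases "a' = a")
        case True then show ?thesis using a' c yg by auto
      next
        case False then show ?thesis using a' yg by auto
      qed
    qed
    then show "f \<in> (\<lambda>(y, g). g(a := y)) ` Sigma (L a) (\<lambda>x. T (S - blk x))"
      using yg by (auto intro!: image_eqI[of _ _ "(y, g)"])
  next
    fix f assume "f \<in> (\<lambda>(y, g). g(a := y)) ` Sigma (L a) (\<lambda>x. T (S - blk x))"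
    then obtain y g where yg: "y \<in> L a" "g \<in> T (S - blk y)" "f = g(a := y)" by auto
    have gP: "g \<in> PiE A L" using yg unfolding T_def by simp
    have "f \<in> PiE (insert a A) L" using yg gP PiE_insert_eq[of a A L] by auto
    moreover have "\<forall>c\<in>S. \<exists>a'\<in>insert a A. (f a', c)\<in>R a'"
    proof
      fix c assume c: "c \<in> S"
      show "\<exists>a'\<in>insert a A. (f a', c)\<in>R a'"
      proof (cases "c \<in> blk y")
        case True then show ?thesis using yg unfolding blk_def by auto
      next
        case False
        then obtain a' where "a' \<in> A" "(g a', c) \<in> R a'" using yg c unfolding T_def by auto
        then show ?thesis using yg insert.hyps(2) by (intro bexI[of _ a']) auto
      qed
    qed
    ultimately show "f \<in> {\<phi>\<in>PiE (insert a A) L. \<forall>c\<in>S. \<exists>a'\<in>insert a A. (\<phi> a', c)\<in>R a'}" by simp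
  qed
  have subS: "Sigma (L a) (\<lambda>x. T (S - blk x)) \<subseteq> L a \<times> PiE A L" unfolding T_def by blast
  have inj: "inj_on (\<lambda>(y, g). g(a := y)) (Sigma (L a) (\<lambda>x. T (S - blk x)))"
    by (rule inj_on_subset[OF inj_combinator[OF insert.hyps(2), of L] subS])
  have finLa: "finite (L a)" and cardLa: "card (L a) = k" using insert.prems(1) by simp_all
  have finA: "finite (L i)" if "i \<in> A" for i using insert.prems(1) that by simp
  have finT: "finite (T S')" for S'
  proof -
    have "T S' \<subseteq> PiE A L" unfolding T_def by blast
    then show ?thesis by (rule finite_subset[OF _ finite_PiE[OF insert.hyps(1) finA]])
  qed
  have card_eq: "card {\<phi>\<in>PiE (insert a A) L. \<forall>c\<in>S. \<exists>a'\<in>insert a A. (\<phi> a', c)\<in>R a'}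
      = (\<Sum>x\<in>L a. card (T (S - blk x)))"
    unfolding eqset using inj finLa finT by (simp add: card_image card_SigmaI)
  have IH: "real (card (T S')) \<le> real k ^ n * h ^ card S'" if "finite S'" for S'
  proof -
    have p1: "\<forall>a\<in>A. finite (L a) \<and> card (L a) = k" using insert.prems(1) by simp
    have p2: "\<forall>a\<in>A. \<forall>x c c'. (x,c)\<in>R a \<and> (x,c')\<in>R a \<longrightarrow> c = c'" using insert.prems(2) by simp
    have p3: "\<forall>a\<in>A. \<forall>x x' c. (x,c)\<in>R a \<and> (x',c)\<in>R a \<longrightarrow> x = x'" using insert.prems(3) by simp
    show ?thesis using insert.IH[OF p1 p2 p3 that] unfolding T_def h_def n_def .
  qed
  define J where "J = {x\<in>L a. blk x \<inter> S \<noteq> {}}"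
  have blk_le: "x' = x" if "c \<in> blk x" "c \<in> blk x'" for x x' c
    using that insert.prems(3) unfolding blk_def by blast
  have blk_single: "c' = c" if "c \<in> blk x" "c' \<in> blk x" for x c c'
    using that insert.prems(2) unfolding blk_def by blast
  have cardJ: "card J \<le> m"
  proof -
    have "inj_on (\<lambda>x. SOME c. c \<in> blk x \<inter> S) J"
    proof (rule inj_onI)
      fix x x' assume xJ: "x \<in> J" and x'J: "x' \<in> J" and eq: "(SOME c. c \<in> blk x \<inter> S) = (SOME c. c \<in> blk x' \<inter> S)"
      have e1: "\<exists>c. c \<in> blk x \<inter> S" using xJ unfolding J_def by blast
      have e2: "\<exists>c. c \<in> blk x' \<inter> S" using x'J unfolding J_def by blast
      define s1 where "s1 = (SOME c. c \<in> blk x \<inter> S)"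
      have 1: "s1 \<in> blk x \<inter> S" unfolding s1_def by (rule someI_ex[OF e1])
      have 2: "s1 \<in> blk x' \<inter> S" unfolding s1_def eq by (rule someI_ex[OF e2])
      have "s1 \<in> blk x" "s1 \<in> blk x'" using 1 2 by blast+
      then show "x = x'" by (rule blk_le[symmetric])
    qed
    moreover have "(\<lambda>x. SOME c. c \<in> blk x \<inter> S) ` J \<subseteq> S"
    proof
      fix y assume "y \<in> (\<lambda>x. SOME c. c \<in> blk x \<inter> S) ` J"
      then obtain x where xJ: "x \<in> J" and y: "y = (SOME c. c \<in> blk x \<inter> S)" by blast
      have e1: "\<exists>c. c \<in> blk x \<inter> S" using xJ unfolding J_def by blast
      show "y \<in> S" unfolding y using someI_ex[OF e1] by simp
    qed
    ultimately show ?thesis unfolding m_def by (rule card_inj_on_le[OF _ _ insert.prems(4)])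
  qed
  have term_eq: "h ^ card (S - blk x) = h ^ m + (if x \<in> J then h ^ (m - 1) - h ^ m else 0)"
    if "x \<in> L a" for x
  proof (cases "x \<in> J")
    case True
    then obtain c where c: "c \<in> blk x" "c \<in> S" unfolding J_def by auto
    then have "S - blk x = S - {c}" using blk_single by auto
    then show ?thesis using True c insert.prems(4) unfolding m_def by simp
  next
    case False
    then have "S - blk x = S" using that unfolding J_def by auto
    then show ?thesis using False unfolding m_def by simp
  qed
  have "real (card {\<phi>\<in>PiE (insert a A) L. \<forall>c\<in>S. \<exists>a'\<in>insert a A. (\<phi> a', c)\<in>R a'})
      = (\<Sum>x\<in>L a. real (card (T (S - blk x))))" unfolding card_eq by simp
  also have "\<dots> \<le> (\<Sum>x\<in>L a. real k ^ n * h ^ card (S - blk x))"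
    by (intro sum_mono IH) (use insert.prems(4) in auto)
  also have "\<dots> = real k ^ n * (\<Sum>x\<in>L a. h ^ m + (if x \<in> J then h ^ (m - 1) - h ^ m else 0))"
    by (simp add: sum_distrib_left term_eq)
  also have "(\<Sum>x\<in>L a. h ^ m + (if x \<in> J then h ^ (m - 1) - h ^ m else 0))
      = real k * h ^ m + real (card J) * (h ^ (m - 1) - h ^ m)"
  proof -
    have "J \<subseteq> L a" unfolding J_def by auto
    then have "(\<Sum>x\<in>L a. (if x \<in> J then h ^ (m - 1) - h ^ m else 0)) = real (card J) * (h ^ (m - 1) - h ^ m)"
      using finLa by (simp add: sum.If_cases Int_absorb1)
    then show ?thesis by (simp add: sum.distrib cardLa)
  qed
  also have "real k ^ n * (real k * h ^ m + real (card J) * (h ^ (m - 1) - h ^ m))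
      \<le> real k ^ Suc n * (1 - (1 - 1 / real k) ^ Suc n) ^ m"
  proof (cases m)
    case 0
    then have "card J = 0" using cardJ by simp
    then show ?thesis using 0 by simp
  next
    case (Suc m')
    have d: "h ^ (m - 1) - h ^ m = h ^ m' * (1 - h)" using Suc by (simp add: algebra_simps)
    have dpos: "0 \<le> h ^ m' * (1 - h)" using h0 h1 by simp
    have "real (card J) * (h ^ (m - 1) - h ^ m) \<le> real m * (h ^ m' * (1 - h))"
      unfolding d using cardJ dpos by (intro mult_right_mono) auto
    moreover have hh: "1 - (1 - 1 / real k) ^ Suc n = h + (1 - h) / real k"
      unfolding h_def by (simp add: field_simps)
    moreover have "real k * (h + (1 - h) / real k) ^ m \<ge> real k * h ^ m + real m * (h ^ m' * (1 - h))"
    proof -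
      have "(h + (1 - h) / real k) ^ Suc m' \<ge> h ^ Suc m' + real (Suc m') * h ^ m' * ((1 - h) / real k)"
        using bern_aux[of h "(1 - h) / real k" m'] h0 h1 kpos by auto
      then have "real k * (h + (1 - h) / real k) ^ Suc m' \<ge> real k * (h ^ Suc m' + real (Suc m') * h ^ m' * ((1 - h) / real k))"
        using kpos by (intro mult_left_mono) auto
      moreover have "real k * (h ^ Suc m' + real (Suc m') * h ^ m' * ((1 - h) / real k)) = real k * h ^ Suc m' + real (Suc m') * (h ^ m' * (1 - h))"
        using kpos by (simp add: field_simps)
      ultimately show ?thesis using Suc by simp
    qed
    ultimately have "real k * h ^ m + real (card J) * (h ^ (m - 1) - h ^ m) \<le> real k * (1 - (1 - 1 / real k) ^ Suc n) ^ m"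
      unfolding hh by linarith
    then show ?thesis using kpos by (simp add: mult_left_mono)
  qed
  finally show ?case unfolding cardins m_def by simp
qed



definition KV :: "nat \<Rightarrow> nat set" where "KV t = {..<2*t}"
definition KE :: "nat \<Rightarrow> nat set set" where
  "KE t = {{a, b} | a b. a < t \<and> t \<le> b \<and> b < 2*t}"

lemma KE_mem: "{u, v} \<in> KE t \<longleftrightarrow> (u < t \<and> t \<le> v \<and> v < 2*t) \<or> (v < t \<and> t \<le> u \<and> u < 2*t)"
  unfolding KE_def by (auto simp: doubleton_eq_iff)

lemma KE_simple: "simple_graph (KV t) (KE t)"
  unfolding simple_graph_def KV_def KE_def by auto

lemma sum_outdeg:
  assumes "D \<subseteq> V \<times> V" "finite V"
  shows "card D = (\<Sum>v\<in>V. outdeg D v)"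
proof -
  have "D = Sigma V (\<lambda>v. {w. (v, w) \<in> D})" using assms(1) by auto
  then have "card D = card (Sigma V (\<lambda>v. {w. (v, w) \<in> D}))" by simp
  also have "\<dots> = (\<Sum>v\<in>V. card {w. (v, w) \<in> D})"
    using assms by (intro card_SigmaI) (auto intro: finite_subset)
  finally show ?thesis unfolding outdeg_def .
qed

lemma orient_lower:
  assumes "orientation (KE t) D" "\<forall>v\<in>KV t. outdeg D v < K" "t \<ge> 1"
  shows "t \<le> 2 * (K - 1)"
proof -
  have sub: "D \<subseteq> KV t \<times> KV t"
  proof
    fix p assume "p \<in> D"
    then obtain u v where p: "p = (u, v)" "(u, v) \<in> D" by (cases p) auto
    then have "{u, v} \<in> KE t" using assms(1) unfolding orientation_def by auto
    then show "p \<in> KV t \<times> KV t" using p unfolding KE_mem KV_def by auto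
  qed
  have finD: "finite D" using sub finite_subset unfolding KV_def by blast
  define f where "f p = (if p \<in> D then p else (snd p, fst p))" for p :: "nat \<times> nat"
  have fD: "f ` ({..<t} \<times> {t..<2*t}) \<subseteq> D"
  proof
    fix q assume "q \<in> f ` ({..<t} \<times> {t..<2*t})"
    then obtain a b where ab: "a < t" "t \<le> b" "b < 2*t" "q = f (a, b)" by auto
    have "{a, b} \<in> KE t" using ab KE_mem by auto
    then have "(a, b) \<in> D \<longleftrightarrow> (b, a) \<notin> D" using assms(1) ab unfolding orientation_def by auto
    then show "q \<in> D" using ab unfolding f_def by auto
  qed
  have finj: "inj_on f ({..<t} \<times> {t..<2*t})"
    by (rule inj_onI) (auto simp: f_def split: if_splits)
  have "t * t = card ({..<t} \<times> {t..<2*t})" by (simp add: card_cartesian_product)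
  also have "\<dots> = card (f ` ({..<t} \<times> {t..<2*t}))" using finj by (simp add: card_image)
  also have "\<dots> \<le> card D" using fD finD by (intro card_mono)
  also have "\<dots> = (\<Sum>v\<in>KV t. outdeg D v)" using sub by (intro sum_outdeg) (auto simp: KV_def)
  also have "\<dots> \<le> (\<Sum>v\<in>KV t. K - 1)" using assms(2) by (intro sum_mono) auto
  also have "\<dots> = 2 * t * (K - 1)" by (simp add: KV_def)
  finally have "t * t \<le> t * (2 * (K - 1))" by (simp add: mult.assoc)
  then show ?thesis using assms(3) by simp
qed

lemma AT_exists:
  "\<exists>D. orientation (KE t) D \<and> (\<forall>v\<in>KV t. outdeg D v < t + 1) \<and>
      card {F \<in> eulerian_subdigraphs (KV t) D. even (card F)} \<noteq>
      card {F \<in> eulerian_subdigraphs (KV t) D. odd (card F)}"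
proof (intro exI conjI)
  define D where "D = {..<t} \<times> {t..<2*t}"
  show "orientation (KE t) D" unfolding orientation_def D_def using KE_mem by auto
  show "\<forall>v\<in>KV t. outdeg D v < t + 1"
  proof
    fix v assume "v \<in> KV t"
    have "{w. (v, w) \<in> D} \<subseteq> {t..<2*t}" unfolding D_def by auto
    then have "outdeg D v \<le> t" unfolding outdeg_def using card_mono[of "{t..<2*t}"] by fastforce
    then show "outdeg D v < t + 1" by simp
  qed
  have eul: "eulerian_subdigraphs (KV t) D = {{}::(nat\<times>nat) set}"
  proof (intro equalityI subsetI)
    fix F assume F: "F \<in> eulerian_subdigraphs (KV t) D"
    have "F = {}"
    proof (rule ccontr)
      assume "F \<noteq> {}"
      then obtain a b where ab: "(a, b) \<in> F" by auto
      then have ab2: "a < t" "t \<le> b" "b < 2*t" using F unfolding eulerian_subdigraphs_def D_def by auto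
      have "{w. (w, a) \<in> F} = {}" using F ab2 unfolding eulerian_subdigraphs_def D_def by auto
      then have "indeg F a = 0" unfolding indeg_def by simp
      moreover have "outdeg F a > 0"
      proof -
        have "{w. (a, w) \<in> F} \<subseteq> {t..<2*t}" using F unfolding eulerian_subdigraphs_def D_def by auto
        then have "finite {w. (a, w) \<in> F}" using finite_subset by blast
        then show ?thesis unfolding outdeg_def using ab card_gt_0_iff by blast
      qed
      moreover have "a \<in> KV t" using ab2 unfolding KV_def by auto
      ultimately show False using F unfolding eulerian_subdigraphs_def by auto
    qed
    then show "F \<in> {{}::(nat\<times>nat) set}" by simp
  next
    fix F assume "F \<in> {{}::(nat\<times>nat) set}"
    then show "F \<in> eulerian_subdigraphs (KV t) D"
      unfolding eulerian_subdigraphs_def outdeg_def indeg_def by simp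
  qed
  show "card {F \<in> eulerian_subdigraphs (KV t) D. even (card F)} \<noteq>
      card {F \<in> eulerian_subdigraphs (KV t) D. odd (card F)}"
  proof -
    have 1: "{F \<in> {{}::(nat\<times>nat) set}. even (card F)} = {{}}" by auto
    have 2: "{F \<in> {{}::(nat\<times>nat) set}. odd (card F)} = {}" by auto
    show ?thesis unfolding eul 1 2 by simp
  qed
qed

lemma AT_lower:
  assumes "t \<ge> 1"
  shows "t \<le> 2 * (AT (KV t) (KE t) - 1)"
proof -
  let ?P = "\<lambda>k. \<exists>D. orientation (KE t) D \<and> (\<forall>v\<in>KV t. outdeg D v < k) \<and>
      card {F \<in> eulerian_subdigraphs (KV t) D. even (card F)} \<noteq>
      card {F \<in> eulerian_subdigraphs (KV t) D. odd (card F)}"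
  have "?P (AT (KV t) (KE t))" unfolding AT_def by (rule LeastI_ex) (use AT_exists in blast)
  then obtain D where "orientation (KE t) D" "\<forall>v\<in>KV t. outdeg D v < AT (KV t) (KE t)" by blast
  then show ?thesis using orient_lower assms by blast
qed



lemma colorable:
  assumes k1: "k \<ge> 1" and small: "real t * (1 - (1 - 1 / real k) ^ t) ^ k < 1"
  shows "correspondence_colorable (KV t) (KE t) k"
  unfolding correspondence_colorable_def
proof (intro allI impI)
  fix L C
  assume H: "(\<forall>v\<in>KV t. finite (L v) \<and> card (L v) = k) \<and> correspondence_assignment (KV t) (KE t) L C"
  define A where "A = {..<t}"
  define B where "B = {t..<2*t}"
  define h where "h = 1 - (1 - 1 / real k) ^ t"
  define Bad where "Bad b = {\<phi>\<in>PiE A L. \<forall>c\<in>L b. \<exists>a\<in>A. (\<phi> a, c) \<in> C a b}" for b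
  have Lfin: "finite (L v)" "card (L v) = k" if "v < 2*t" for v
    using H that unfolding KV_def by auto
  have CA: "partial_matching (L u) (L v) (C u v) \<and> C v u = (C u v)\<inverse>"
    if "{u, v} \<in> KE t" "u \<noteq> v" for u v
    using H that unfolding correspondence_assignment_def by blast
  have pm: "partial_matching (L a) (L b) (C a b)" if "a \<in> A" "b \<in> B" for a b
  proof -
    have "{a, b} \<in> KE t" "a \<noteq> b" using that unfolding A_def B_def KE_mem by auto
    then show ?thesis using CA by blast
  qed
  have finPi: "finite (PiE A L)" using Lfin unfolding A_def by (intro finite_PiE) auto
  have cardPi: "card (PiE A L) = k ^ t"
  proof -
    have "card (PiE A L) = (\<Prod>i\<in>A. card (L i))" unfolding A_def by (rule card_PiE) simp
    also have "\<dots> = (\<Prod>i\<in>A. k)" using Lfin unfolding A_def by (intro prod.cong) auto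
    finally show ?thesis unfolding A_def by simp
  qed
  have bad_bound: "real (card (Bad b)) \<le> real k ^ t * h ^ k" if b: "b \<in> B" for b
  proof -
    have p1: "\<forall>a\<in>A. finite (L a) \<and> card (L a) = k" using Lfin unfolding A_def by auto
    have p2: "\<forall>a\<in>A. \<forall>x c c'. (x,c)\<in>C a b \<and> (x,c')\<in>C a b \<longrightarrow> c = c'"
      using pm b unfolding partial_matching_def by blast
    have p3: "\<forall>a\<in>A. \<forall>x x' c. (x,c)\<in>C a b \<and> (x',c)\<in>C a b \<longrightarrow> x = x'"
      using pm b unfolding partial_matching_def by blast
    have bl: "b < 2*t" using b unfolding B_def by simp
    have "real (card (Bad b)) \<le> real k ^ card A * (1 - (1 - 1 / real k) ^ card A) ^ card (L b)"
      unfolding Bad_def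
      by (rule count_bound[of A k L "\<lambda>a. C a b" "L b", OF _ k1 p1 p2 p3 Lfin(1)[OF bl]]) (simp add: A_def)
    then show ?thesis using Lfin[OF bl] unfolding A_def h_def by simp
  qed
  have finBad: "finite (Bad b)" for b
    by (rule finite_subset[OF _ finPi]) (auto simp: Bad_def)
  have "real (card (\<Union>b\<in>B. Bad b)) \<le> real (\<Sum>b\<in>B. card (Bad b))"
    unfolding of_nat_le_iff by (rule card_UN_le) (simp add: B_def)
  also have "\<dots> = (\<Sum>b\<in>B. real (card (Bad b)))" by simp
  also have "\<dots> \<le> (\<Sum>b\<in>B. real k ^ t * h ^ k)" by (intro sum_mono bad_bound)
  also have "\<dots> = real t * (real k ^ t * h ^ k)" by (simp add: B_def)
  also have "\<dots> = real k ^ t * (real t * h ^ k)" by simp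
  also have "\<dots> < real k ^ t"
    using small k1 unfolding h_def by simp
  finally have "card (\<Union>b\<in>B. Bad b) < card (PiE A L)" unfolding cardPi
    by (metis of_nat_less_iff of_nat_power)
  then have "\<not> PiE A L \<subseteq> (\<Union>b\<in>B. Bad b)"
    using card_mono[of "\<Union>b\<in>B. Bad b" "PiE A L"] finBad by (auto simp: B_def)
  then obtain \<phi> where \<phi>: "\<phi> \<in> PiE A L" "\<And>b. b \<in> B \<Longrightarrow> \<phi> \<notin> Bad b" by blast
  have good: "\<exists>c. c \<in> L b \<and> (\<forall>a\<in>A. (\<phi> a, c) \<notin> C a b)" if "b \<in> B" for b
    using \<phi>(1) \<phi>(2)[OF that] unfolding Bad_def by blast
  define \<psi> where "\<psi> v = (if v < t then \<phi> v else (SOME c. c \<in> L v \<and> (\<forall>a\<in>A. (\<phi> a, c) \<notin> C a v)))" for v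
  have \<psi>B: "\<psi> b \<in> L b \<and> (\<forall>a\<in>A. (\<phi> a, \<psi> b) \<notin> C a b)" if "b \<in> B" for b
  proof -
    have "\<not> b < t" using that unfolding B_def by simp
    then show ?thesis unfolding \<psi>_def using someI_ex[OF good[OF that]] by simp
  qed
  have \<psi>A: "\<psi> a = \<phi> a" "\<phi> a \<in> L a" if "a < t" for a
    using that \<phi>(1) unfolding \<psi>_def A_def by (auto simp: PiE_iff)
  show "\<exists>\<phi>. LC_coloring (KV t) (KE t) L C \<phi>"
    unfolding LC_coloring_def
  proof (intro exI conjI allI impI ballI)
    fix v assume "v \<in> KV t"
    then show "\<psi> v \<in> L v"
      using \<psi>A \<psi>B unfolding KV_def B_def by (cases "v < t") auto
  next
    fix u v assume e: "{u, v} \<in> KE t" "u \<noteq> v"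
    then consider "u < t" "t \<le> v" "v < 2*t" | "v < t" "t \<le> u" "u < 2*t" unfolding KE_mem by blast
    then show "(\<psi> u, \<psi> v) \<notin> C u v"
    proof cases
      case 1
      then have "v \<in> B" "u \<in> A" unfolding A_def B_def by auto
      then show ?thesis using \<psi>B \<psi>A 1 by auto
    next
      case 2
      then have vB: "u \<in> B" "v \<in> A" unfolding A_def B_def by auto
      have "{v, u} \<in> KE t" using e by (simp add: insert_commute)
      then have "C u v = (C v u)\<inverse>" using CA e(2) by blast
      then show ?thesis using \<psi>B[OF vB(1)] vB(2) \<psi>A 2 by auto
    qed
  qed
qed

lemma numeric:
  fixes s k :: nat
  assumes s1: "s \<ge> 1" and k2: "k \<ge> 2" and kbig: "real k \<ge> 4 * real s * exp (2 * real s)"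
  shows "real (s * (k - 1)) * (1 - (1 - 1 / real k) ^ (s * (k - 1))) ^ k < 1"
proof -
  define y where "y = 1 - 1 / real k"
  have kr: "real k \<ge> 2" using k2 by simp
  have y0: "0 < y" and y1: "y \<le> 1" unfolding y_def using kr by (auto simp: field_simps)
  have km1: "real (k - 1) = real k - 1" using k2 by simp
  have "(1 + 1 / real (k - 1)) ^ (k - 1) \<le> exp (1 / real (k - 1)) ^ (k - 1)"
    using exp_ge_add_one_self[of "1 / real (k - 1)"] by (intro power_mono) auto
  also have "\<dots> = exp 1"
    using k2 by (simp add: exp_of_nat_mult[symmetric])
  finally have e1: "(1 + 1 / real (k - 1)) ^ (k - 1) \<le> exp 1" .
  have "y * (1 + 1 / real (k - 1)) = 1" unfolding y_def km1 using kr by (simp add: field_simps)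
  then have "y ^ (k - 1) * (1 + 1 / real (k - 1)) ^ (k - 1) = 1"
    by (metis power_mult_distrib power_one)
  then have yP: "y ^ (k - 1) * (1 + 1 / real (k - 1)) ^ (k - 1) = 1" .
  have "y ^ (k - 1) \<ge> exp (-1)"
  proof -
    define P where "P = (1 + 1 / real (k - 1)) ^ (k - 1)"
    have a: "y ^ (k - 1) * P = 1" using yP unfolding P_def .
    have p: "P > 0" unfolding P_def by (intro zero_less_power) (simp add: add_pos_nonneg)
    have e1': "P \<le> exp 1" using e1 unfolding P_def .
    have "y ^ (k - 1) = 1 / P" using a p by (simp add: eq_divide_eq)
    also have "\<dots> \<ge> 1 / exp 1" using e1' p by (intro divide_left_mono) auto
    finally show ?thesis by (simp add: exp_minus field_simps)
  qed
  define q where "q = exp (- real s)"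
  have q0: "0 < q" unfolding q_def by simp
  have "y ^ (s * (k - 1)) = (y ^ (k - 1)) ^ s" by (metis power_mult mult.commute)
  also have "\<dots> \<ge> exp (-1) ^ s" using \<open>y ^ (k - 1) \<ge> exp (-1)\<close> by (intro power_mono) auto
  finally have yq: "y ^ (s * (k - 1)) \<ge> q" unfolding q_def by (simp add: exp_of_nat_mult[symmetric])
  define h where "h = 1 - y ^ (s * (k - 1))"
  have h0: "0 \<le> h" unfolding h_def using y0 y1 by (simp add: power_le_one)
  have h1: "h \<le> 1 - q" unfolding h_def using yq by simp
  have "1 - q \<le> exp (- q)" using exp_ge_add_one_self[of "-q"] by simp
  then have "h ^ k \<le> exp (- q) ^ k" using h0 h1 by (intro power_mono) auto
  also have "\<dots> = exp (- (q * real k))" by (simp add: exp_of_nat_mult[symmetric] mult.commute)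
  finally have hk: "h ^ k \<le> exp (- (q * real k))" .
  define x where "x = q * real k"
  have x0: "x \<ge> 0" unfolding x_def using q0 by simp
  have "exp x = exp (x / 2) ^ 2" by (simp add: exp_of_nat_mult[symmetric])
  also have "\<dots> \<ge> (1 + x / 2) ^ 2" using x0 exp_ge_add_one_self[of "x/2"] by (intro power_mono) auto
  finally have ex: "exp x \<ge> (1 + x / 2) ^ 2" .
  have "(1 + x / 2) ^ 2 > x ^ 2 / 4" using x0 by (simp add: power2_eq_square field_simps)
  moreover have "x ^ 2 / 4 \<ge> real s * real k"
  proof -
    have qq: "q * q * exp (2 * real s) = 1" unfolding q_def by (simp add: exp_add[symmetric])
    have xe: "x ^ 2 / 4 = real k * (q * q * real k) / 4" unfolding x_def by (simp add: power2_eq_square)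
    have kq: "q * q * real k \<ge> q * q * (4 * real s * exp (2 * real s))"
      using kbig q0 by (intro mult_left_mono) auto
    have "real k * (q * q * real k) \<ge> real k * (q * q * (4 * real s * exp (2 * real s)))"
      by (rule mult_left_mono[OF kq]) simp
    then have "real k * (q * q * real k) / 4 \<ge> real k * (q * q * (4 * real s * exp (2 * real s))) / 4"
      by (rule divide_right_mono) simp
    moreover have "real k * (q * q * (4 * real s * exp (2 * real s))) / 4 = real s * real k"
    proof -
      have "real k * (q * q * (4 * real s * exp (2 * real s))) / 4 = real k * real s * (q * q * exp (2 * real s))"
        by (simp add: algebra_simps)
      then show ?thesis using qq by simp
    qed
    ultimately show ?thesis using xe by simp
  qed
  ultimately have big: "exp x > real s * real k" using ex by linarith
  have "real (s * (k - 1)) < real s * real k" using s1 k2 km1 by simp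
  then have tlt: "real (s * (k - 1)) < exp x" using big by linarith
  have "real (s * (k - 1)) * h ^ k \<le> real (s * (k - 1)) * exp (- x)"
    using hk unfolding x_def by (intro mult_left_mono) auto
  also have "\<dots> < exp x * exp (- x)" using tlt by (intro mult_strict_right_mono) auto
  also have "\<dots> = 1" by (simp add: exp_minus)
  finally show ?thesis unfolding h_def y_def .
qed



lemma main_graph:
  fixes s k :: nat
  assumes s1: "s \<ge> 1" and k2: "k \<ge> 2" and kbig: "real k \<ge> 4 * real s * exp (2 * real s)"
  shows "simple_graph (KV (s * (k - 1))) (KE (s * (k - 1))) \<and>
         1 \<le> chi_DP (KV (s * (k - 1))) (KE (s * (k - 1))) \<and>
         chi_DP (KV (s * (k - 1))) (KE (s * (k - 1))) \<le> k \<and>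
         s * (k - 1) \<le> 2 * (AT (KV (s * (k - 1))) (KE (s * (k - 1))) - 1)"
proof (intro conjI)
  define t where "t = s * (k - 1)"
  have t1: "t \<ge> 1" unfolding t_def using s1 k2 by simp
  have col: "correspondence_colorable (KV t) (KE t) k"
    using colorable[of k t] numeric[OF s1 k2 kbig] k2 unfolding t_def by simp
  show "simple_graph (KV (s * (k - 1))) (KE (s * (k - 1)))" by (rule KE_simple)
  show "chi_DP (KV (s * (k - 1))) (KE (s * (k - 1))) \<le> k"
    using col unfolding chi_DP_def t_def by (rule Least_le)
  show "s * (k - 1) \<le> 2 * (AT (KV (s * (k - 1))) (KE (s * (k - 1))) - 1)"
    using AT_lower[OF t1] unfolding t_def .
  have c: "correspondence_colorable (KV t) (KE t) (chi_DP (KV t) (KE t))"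
    unfolding chi_DP_def by (rule LeastI[of _ k]) (rule col)
  have "\<not> correspondence_colorable (KV t) (KE t) 0"
  proof
    assume "correspondence_colorable (KV t) (KE t) 0"
    moreover have "correspondence_assignment (KV t) (KE t) (\<lambda>_. {}) (\<lambda>_ _. {})"
      unfolding correspondence_assignment_def partial_matching_def by simp
    ultimately obtain \<phi> where "LC_coloring (KV t) (KE t) (\<lambda>_. {}) (\<lambda>_ _. {}) \<phi>"
      unfolding correspondence_colorable_def by fastforce
    moreover have "0 \<in> KV t" unfolding KV_def using t1 by simp
    ultimately show False unfolding LC_coloring_def by blast
  qed
  then have "chi_DP (KV t) (KE t) \<noteq> 0" using c by metis
  then show "1 \<le> chi_DP (KV (s * (k - 1))) (KE (s * (k - 1)))" unfolding t_def by simp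
qed

theorem corollary2:
  shows "(\<exists>S. infinite S \<and>
            (\<forall>(V, E)\<in>S. simple_graph V E \<and> chi_DP V E < AT V E) \<and>
            (\<forall>G\<in>S. \<forall>H\<in>S. G \<noteq> H \<longrightarrow> \<not> graph_iso G H)) \<and>
         (\<forall>M::real. M > 0 \<longrightarrow>
            (\<exists>V E. simple_graph V E \<and> real (AT V E) / real (chi_DP V E) > M))"
proof (intro conjI allI impI)
  define k0 :: nat where "k0 = nat \<lceil>4 * real (3::nat) * exp (2 * real (3::nat))\<rceil> + 2"
  define g where "g k = (KV (3 * (k - 1)), KE (3 * (k - 1)))" for k :: nat
  have k0: "k \<ge> 2" "real k \<ge> 4 * real (3::nat) * exp (2 * real (3::nat))" if "k \<in> {k0..}" for k
  proof -
    show "k \<ge> 2" using that unfolding k0_def by simp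
    have "4 * real (3::nat) * exp (2 * real (3::nat)) \<le> real (nat \<lceil>4 * real (3::nat) * exp (2 * real (3::nat))\<rceil>)"
      by linarith
    also have "\<dots> \<le> real k" using that unfolding k0_def by simp
    finally show "real k \<ge> 4 * real (3::nat) * exp (2 * real (3::nat))" .
  qed
  have cardg: "card (fst (g k)) = 6 * (k - 1)" for k unfolding g_def KV_def by simp
  have inj: "inj_on g {k0..}"
  proof (rule inj_onI)
    fix k k' assume "k \<in> {k0..}" "k' \<in> {k0..}" "g k = g k'"
    then have "6 * (k - 1) = 6 * (k' - 1)" "k \<ge> 2" "k' \<ge> 2" using cardg[of k] cardg[of k'] k0 by metis+
    then show "k = k'" by simp
  qed
  show "\<exists>S. infinite S \<and>
            (\<forall>(V, E)\<in>S. simple_graph V E \<and> chi_DP V E < AT V E) \<and>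
            (\<forall>G\<in>S. \<forall>H\<in>S. G \<noteq> H \<longrightarrow> \<not> graph_iso G H)"
  proof (intro exI conjI)
    show "infinite (g ` {k0..})" using finite_imageD[OF _ inj] infinite_Ici by blast
    show "\<forall>(V, E)\<in>g ` {k0..}. simple_graph V E \<and> chi_DP V E < AT V E"
    proof (clarsimp simp: g_def)
      fix k assume kk: "k0 \<le> k"
      then have k2: "k \<ge> 2" and kb: "real k \<ge> 4 * real (3::nat) * exp (2 * real (3::nat))" using k0 by auto
      note m = main_graph[of 3 k, OF _ k2 kb]
      show "simple_graph (KV (3 * (k - Suc 0))) (KE (3 * (k - Suc 0))) \<and>
          chi_DP (KV (3 * (k - Suc 0))) (KE (3 * (k - Suc 0))) < AT (KV (3 * (k - Suc 0))) (KE (3 * (k - Suc 0)))"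
        using m k2 by simp linarith
    qed
    show "\<forall>G\<in>g ` {k0..}. \<forall>H\<in>g ` {k0..}. G \<noteq> H \<longrightarrow> \<not> graph_iso G H"
    proof (intro ballI impI notI)
      fix G H assume G: "G \<in> g ` {k0..}" and H: "H \<in> g ` {k0..}" and ne: "G \<noteq> H" and iso: "graph_iso G H"
      obtain k k' where kk: "k \<in> {k0..}" "k' \<in> {k0..}" "G = g k" "H = g k'" using G H by blast
      then have "k \<noteq> k'" using ne by blast
      moreover have "k \<ge> 2" "k' \<ge> 2" using kk k0 by auto
      ultimately have "card (fst G) \<noteq> card (fst H)" using kk cardg by simp
      moreover obtain f where "bij_betw f (fst G) (fst H)" using iso unfolding graph_iso_def by blast
      ultimately show False using bij_betw_same_card by blast
    qed
  qed
next
  fix M :: real assume M: "M > 0"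
  define s :: nat where "s = nat \<lceil>4 * M\<rceil> + 1"
  define k :: nat where "k = nat \<lceil>4 * real s * exp (2 * real s)\<rceil> + 2"
  have s1: "s \<ge> 1" unfolding s_def by simp
  have sM: "real s > 4 * M" unfolding s_def by linarith
  have k2: "k \<ge> 2" unfolding k_def by simp
  have kb: "real k \<ge> 4 * real s * exp (2 * real s)" unfolding k_def by linarith
  note m = main_graph[OF s1 k2 kb]
  define V where "V = KV (s * (k - 1))"
  define E where "E = KE (s * (k - 1))"
  have sg: "simple_graph V E" and c1: "1 \<le> chi_DP V E" and ck: "chi_DP V E \<le> k"
    and at: "s * (k - 1) \<le> 2 * (AT V E - 1)" using m unfolding V_def E_def by auto
  have at': "real s * (real k - 1) \<le> 2 * (real (AT V E) - 1)"
  proof -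
    have "AT V E \<ge> 1" using at s1 k2 by (cases "AT V E") auto
    then have "real (AT V E - 1) = real (AT V E) - 1" by simp
    moreover have "real (s * (k - 1)) = real s * (real k - 1)" using k2 by simp
    ultimately show ?thesis using at by (metis of_nat_le_iff of_nat_mult of_nat_numeral)
  qed
  have kr: "real k \<ge> 2" using k2 by simp
  have "real s * real k \<le> 2 * (real s * (real k - 1))"
    using kr s1 by (simp add: algebra_simps)
  then have "real s * real k \<le> 4 * (real (AT V E) - 1)" using at' by linarith
  moreover have "4 * M * real k < real s * real k" using sM kr by simp
  moreover have "4 * M * real k = 4 * (M * real k)" by simp
  ultimately have "M * real k < real (AT V E)" by (smt (verit))
  then have "M < real (AT V E) / real k" using kr by (simp add: field_simps)
  also have "\<dots> \<le> real (AT V E) / real (chi_DP V E)"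
    using c1 ck by (intro divide_left_mono) auto
  finally show "\<exists>V E. simple_graph V E \<and> real (AT V E) / real (chi_DP V E) > M"
    using sg by blast
qed

end
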